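(* Let $(\mathcal{C}^{\bullet},\partial)$ be a cochain complex of real vector spaces with a compatible bigrading $\mathcal{C}^{k}=\bigoplus_{p+q=k}\mathcal{C}^{p,q}$, $\mathcal{C}^{p,q}=\{0\}$ whenever $p<0$ or $q<0$, and $\partial=\partial_{2,-1}+\partial_{1,0}+\partial_{0,1}$ with $\partial_{i,j}(\mathcal{C}^{p,q})\subseteq\mathcal{C}^{p+i,q+j}$. Then for all $p,q\in\mathbb{Z}$ with $p+q=k$, \[ E^{p,q}_{\infty}\cong\frac{\pi_{q}(Z^{k}(\mathcal{C},\partial))\cap\mathcal{C}^{p,q}}{\pi_{q}(B^{k}(\mathcal{C},\partial))\cap\mathcal{C}^{p,q}}. \]
   Context: $F^{p}\mathcal{C}:=\bigoplus_{i\geq p}\mathcal{C}^{i,j}$ and $F^{p}\mathcal{C}^{k}:=F^{p}\mathcal{C}\cap\mathcal{C}^{k}$; $E^{p,q}_{\infty}:=\dfrac{Z^{p+q}(\mathcal{C},\partial)\cap F^{p}\mathcal{C}^{p+q}+F^{p+1}\mathcal{C}^{p+q}}{B^{p+q}(\mathcal{C},\partial)\cap F^{p}\mathcal{C}^{p+q}+F^{p+1}\mathcal{C}^{p+q}}$ (the limit term of the spectral sequence of the filtered complex). $G^{q}\mathcal{C}:=\bigoplus_{j\geq q}\mathcal{C}^{i,j}$ and $\pi_{q}:\mathcal{C}\to G^{q}\mathcal{C}$ is the projection along the bigrading. $Z^{k},B^{k}$ denote $k$-cocycles and $k$-coboundaries. *)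

theory Defs
  imports "HOL-Analysis.Analysis"
begin

text \<open>A bigraded real vector space: the total space is the whole type 'a, and
  C p q are subspaces such that every vector is uniquely a finite sum of
  homogeneous components (internal direct sum of all the C p q).\<close>

definition is_decomp :: "(int \<Rightarrow> int \<Rightarrow> 'a::real_vector set) \<Rightarrow> 'a \<Rightarrow> (int \<Rightarrow> int \<Rightarrow> 'a) \<Rightarrow> bool" where
  "is_decomp C x f \<longleftrightarrow> finite {(p,q). f p q \<noteq> 0} \<and> (\<forall>p q. f p q \<in> C p q)
      \<and> x = (\<Sum>(p,q)\<in>{(p,q). f p q \<noteq> 0}. f p q)"

definition bigraded :: "(int \<Rightarrow> int \<Rightarrow> 'a::real_vector set) \<Rightarrow> bool" where
  "bigraded C \<longleftrightarrow> (\<forall>p q. subspace (C p q)) \<and> (\<forall>x. \<exists>!f. is_decomp C x f)"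

definition comp :: "(int \<Rightarrow> int \<Rightarrow> 'a::real_vector set) \<Rightarrow> int \<Rightarrow> int \<Rightarrow> 'a \<Rightarrow> 'a" where
  "comp C p q x = (THE f. is_decomp C x f) p q"

definition Ctot :: "(int \<Rightarrow> int \<Rightarrow> 'a::real_vector set) \<Rightarrow> int \<Rightarrow> 'a set" where
  "Ctot C k = span (\<Union>{C p q | p q. p + q = k})"

definition Filt :: "(int \<Rightarrow> int \<Rightarrow> 'a::real_vector set) \<Rightarrow> int \<Rightarrow> 'a set" where
  "Filt C p = span (\<Union>{C i j | i j. p \<le> i})"

definition FiltK :: "(int \<Rightarrow> int \<Rightarrow> 'a::real_vector set) \<Rightarrow> int \<Rightarrow> int \<Rightarrow> 'a set" where
  "FiltK C p k = Filt C p \<inter> Ctot C k"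

definition piG :: "(int \<Rightarrow> int \<Rightarrow> 'a::real_vector set) \<Rightarrow> int \<Rightarrow> 'a \<Rightarrow> 'a" where
  "piG C q x = (\<Sum>(i,j)\<in>{(i,j). comp C i j x \<noteq> 0 \<and> q \<le> j}. comp C i j x)"

definition cocycles :: "(int \<Rightarrow> int \<Rightarrow> 'a::real_vector set) \<Rightarrow> ('a \<Rightarrow> 'a) \<Rightarrow> int \<Rightarrow> 'a set" where
  "cocycles C d k = {x \<in> Ctot C k. d x = 0}"

definition coboundaries :: "(int \<Rightarrow> int \<Rightarrow> 'a::real_vector set) \<Rightarrow> ('a \<Rightarrow> 'a) \<Rightarrow> int \<Rightarrow> 'a set" where
  "coboundaries C d k = d ` Ctot C (k - 1)"

definition setsum :: "'a::real_vector set \<Rightarrow> 'a set \<Rightarrow> 'a set" where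
  "setsum X Y = {a + b | a b. a \<in> X \<and> b \<in> Y}"

definition Einf_num :: "(int \<Rightarrow> int \<Rightarrow> 'a::real_vector set) \<Rightarrow> ('a \<Rightarrow> 'a) \<Rightarrow> int \<Rightarrow> int \<Rightarrow> 'a set" where
  "Einf_num C d p q = setsum (cocycles C d (p + q) \<inter> FiltK C p (p + q)) (FiltK C (p + 1) (p + q))"

definition Einf_den :: "(int \<Rightarrow> int \<Rightarrow> 'a::real_vector set) \<Rightarrow> ('a \<Rightarrow> 'a) \<Rightarrow> int \<Rightarrow> int \<Rightarrow> 'a set" where
  "Einf_den C d p q = setsum (coboundaries C d (p + q) \<inter> FiltK C p (p + q)) (FiltK C (p + 1) (p + q))"

text \<open>Quotient A/A' realised as the set of cosets x + A', x \<in> A, and linear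
  isomorphism of two such quotient spaces.\<close>
definition coset :: "'a::real_vector set \<Rightarrow> 'a \<Rightarrow> 'a set" where
  "coset A' x = {x + y | y. y \<in> A'}"

definition qspace :: "'a::real_vector set \<Rightarrow> 'a set \<Rightarrow> 'a set set" where
  "qspace A A' = coset A' ` A"

definition quot_iso :: "'a::real_vector set \<Rightarrow> 'a set \<Rightarrow> 'b::real_vector set \<Rightarrow> 'b set \<Rightarrow> bool" where
  "quot_iso A A' B B' \<longleftrightarrow> (\<exists>\<phi>. bij_betw \<phi> (qspace A A') (qspace B B') \<and>
     (\<forall>x\<in>A. \<forall>y\<in>A. \<forall>c::real. \<forall>u v. u \<in> \<phi> (coset A' x) \<longrightarrow> v \<in> \<phi> (coset A' y) \<longrightarrow>
        \<phi> (coset A' (c *\<^sub>R x + y)) = coset B' (c *\<^sub>R u + v)))"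

end

theory Submission
  imports Defs
begin

lemma decomp_comp:
  assumes "bigraded C"
  shows "is_decomp C x (\<lambda>p q. comp C p q x)"
proof -
  have "\<exists>!f. is_decomp C x f" using assms unfolding bigraded_def by blast
  hence "is_decomp C x (THE f. is_decomp C x f)" by (rule theI')
  thus ?thesis unfolding comp_def by simp
qed

lemma comp_unique:
  assumes "bigraded C" "is_decomp C x f"
  shows "comp C p q x = f p q"
proof -
  have "\<exists>!f. is_decomp C x f" using assms unfolding bigraded_def by blast
  hence "(THE f. is_decomp C x f) = f" using assms(2) by (metis the1_equality)
  thus ?thesis unfolding comp_def by simp
qed

lemma is_decompI:
  assumes "finite S" "{(p,q). f p q \<noteq> 0} \<subseteq> S" "\<And>p q. f p q \<in> C p q"
    and "x = (\<Sum>(p,q)\<in>S. f p q)"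
  shows "is_decomp C x f"
proof -
  have fin: "finite {(p,q). f p q \<noteq> 0}" using assms(1,2) finite_subset by blast
  have "(\<Sum>(p,q)\<in>S. f p q) = (\<Sum>(p,q)\<in>{(p,q). f p q \<noteq> 0}. f p q)"
    by (rule sum.mono_neutral_right[OF assms(1) assms(2)]) auto
  thus ?thesis unfolding is_decomp_def using fin assms by auto
qed

lemma comp_C: "bigraded C \<Longrightarrow> comp C p q x \<in> C p q"
  using decomp_comp unfolding is_decomp_def by blast

lemma comp_fin: "bigraded C \<Longrightarrow> finite {(p,q). comp C p q x \<noteq> 0}"
  using decomp_comp unfolding is_decomp_def by blast

lemma comp_sum: "bigraded C \<Longrightarrow> x = (\<Sum>(p,q)\<in>{(p,q). comp C p q x \<noteq> 0}. comp C p q x)"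
  using decomp_comp unfolding is_decomp_def by blast

lemma comp_ext:
  assumes "bigraded C" "\<And>p q. comp C p q x = comp C p q y"
  shows "x = y"
  using comp_sum[OF assms(1), of x] comp_sum[OF assms(1), of y] assms(2) by simp

lemma sub0: "bigraded C \<Longrightarrow> 0 \<in> C p q"
  unfolding bigraded_def using subspace_0 by blast

lemma comp_add:
  assumes bg: "bigraded C"
  shows "comp C p q (x + y) = comp C p q x + comp C p q y"
proof -
  let ?S = "{(p,q). comp C p q x \<noteq> 0} \<union> {(p,q). comp C p q y \<noteq> 0}"
  have fin: "finite ?S" using comp_fin[OF bg] by blast
  have "is_decomp C (x + y) (\<lambda>p q. comp C p q x + comp C p q y)"
  proof (rule is_decompI[OF fin])
    show "{(p, q). comp C p q x + comp C p q y \<noteq> 0} \<subseteq> ?S" by auto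
    show "comp C p q x + comp C p q y \<in> C p q" for p q
      using bg comp_C[OF bg] unfolding bigraded_def by (meson subspace_add)
    have "x = (\<Sum>(p,q)\<in>?S. comp C p q x)"
      by (subst comp_sum[OF bg, of x], rule sum.mono_neutral_left) (use fin in auto)
    moreover have "y = (\<Sum>(p,q)\<in>?S. comp C p q y)"
      by (subst comp_sum[OF bg, of y], rule sum.mono_neutral_left) (use fin in auto)
    ultimately show "x + y = (\<Sum>(p,q)\<in>?S. comp C p q x + comp C p q y)"
      by (simp add: sum.distrib case_prod_beta)
  qed
  thus ?thesis using comp_unique[OF bg] by blast
qed

lemma comp_scale:
  assumes bg: "bigraded C"
  shows "comp C p q (c *\<^sub>R x) = c *\<^sub>R comp C p q x"
proof -
  let ?S = "{(p,q). comp C p q x \<noteq> 0}"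
  have fin: "finite ?S" using comp_fin[OF bg] by blast
  have "is_decomp C (c *\<^sub>R x) (\<lambda>p q. c *\<^sub>R comp C p q x)"
  proof (rule is_decompI[OF fin])
    show "{(p, q). c *\<^sub>R comp C p q x \<noteq> 0} \<subseteq> ?S" by auto
    show "c *\<^sub>R comp C p q x \<in> C p q" for p q
      using bg comp_C[OF bg] unfolding bigraded_def by (meson subspace_scale)
    show "c *\<^sub>R x = (\<Sum>(p,q)\<in>?S. c *\<^sub>R comp C p q x)"
      by (subst comp_sum[OF bg, of x]) (simp add: scaleR_sum_right case_prod_beta)
  qed
  thus ?thesis using comp_unique[OF bg] by blast
qed

lemma comp_linear: "bigraded C \<Longrightarrow> linear (comp C p q)"
  by (rule linearI) (simp_all add: comp_add comp_scale)

lemma comp_in: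
  assumes bg: "bigraded C" and x: "x \<in> C i j"
  shows "comp C p q x = (if p = i \<and> q = j then x else 0)"
proof -
  have "is_decomp C x (\<lambda>p q. if p = i \<and> q = j then x else 0)"
  proof (rule is_decompI[of "{(i,j)}"])
    show "(if p = i \<and> q = j then x else 0) \<in> C p q" for p q using x sub0[OF bg] by auto
  qed auto
  thus ?thesis using comp_unique[OF bg] by blast
qed

lemma span_char:
  assumes bg: "bigraded C"
  shows "span (\<Union>{C i j | i j. P i j}) = {x. \<forall>i j. \<not> P i j \<longrightarrow> comp C i j x = 0}"
proof
  have sub: "subspace {x. \<forall>i j. \<not> P i j \<longrightarrow> comp C i j x = 0}"
    unfolding subspace_def using comp_add[OF bg] comp_scale[OF bg] comp_in[OF bg sub0[OF bg]]
    by auto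
  show "span (\<Union>{C i j | i j. P i j}) \<subseteq> {x. \<forall>i j. \<not> P i j \<longrightarrow> comp C i j x = 0}"
    by (rule span_minimal[OF _ sub]) (auto simp: comp_in[OF bg])
next
  show "{x. \<forall>i j. \<not> P i j \<longrightarrow> comp C i j x = 0} \<subseteq> span (\<Union>{C i j | i j. P i j})"
  proof
    fix x assume x: "x \<in> {x. \<forall>i j. \<not> P i j \<longrightarrow> comp C i j x = 0}"
    have "(\<Sum>(p,q)\<in>{(p,q). comp C p q x \<noteq> 0}. comp C p q x) \<in> span (\<Union>{C i j | i j. P i j})"
    proof (rule span_sum)
      fix pq assume "pq \<in> {(p,q). comp C p q x \<noteq> 0}"
      then obtain a b where pq: "pq = (a,b)" "comp C a b x \<noteq> 0" by auto
      hence "P a b" using x by auto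
      hence "comp C a b x \<in> \<Union>{C i j | i j. P i j}" using comp_C[OF bg] by blast
      thus "(case pq of (p,q) \<Rightarrow> comp C p q x) \<in> span (\<Union>{C i j | i j. P i j})"
        using pq by (simp add: span_base)
    qed
    thus "x \<in> span (\<Union>{C i j | i j. P i j})" using comp_sum[OF bg, of x] by simp
  qed
qed

lemma Ctot_iff: "bigraded C \<Longrightarrow> x \<in> Ctot C k \<longleftrightarrow> (\<forall>i j. i + j \<noteq> k \<longrightarrow> comp C i j x = 0)"
  unfolding Ctot_def using span_char[of C "\<lambda>i j. i + j = k"] by auto

lemma Filt_iff: "bigraded C \<Longrightarrow> x \<in> Filt C p \<longleftrightarrow> (\<forall>i j. i < p \<longrightarrow> comp C i j x = 0)"
  unfolding Filt_def using span_char[of C "\<lambda>i j. p \<le> i"] by (auto simp: not_le)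

lemma C_iff: 
  assumes bg: "bigraded C"
  shows "x \<in> C p q \<longleftrightarrow> (\<forall>i j. \<not> (i = p \<and> j = q) \<longrightarrow> comp C i j x = 0)"
proof -
  have "\<Union>{C i j | i j. i = p \<and> j = q} = C p q" by auto
  moreover have "subspace (C p q)" using bg unfolding bigraded_def by blast
  ultimately have "C p q = {x. \<forall>i j. \<not> (i = p \<and> j = q) \<longrightarrow> comp C i j x = 0}"
    using span_char[OF bg, of "\<lambda>i j. i = p \<and> j = q"] by (metis span_eq_iff)
  thus ?thesis by blast
qed

lemma comp_piG:
  assumes bg: "bigraded C"
  shows "comp C a b (piG C q x) = (if q \<le> b then comp C a b x else 0)"
proof -
  let ?S = "{(i,j). comp C i j x \<noteq> 0 \<and> q \<le> j}"
  have fin: "finite ?S" using comp_fin[OF bg, of x] by (rule finite_subset[rotated]) auto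
  have "is_decomp C (piG C q x) (\<lambda>a b. if q \<le> b then comp C a b x else 0)"
  proof (rule is_decompI[OF fin])
    show "(if q \<le> b then comp C a b x else 0) \<in> C a b" for a b using comp_C[OF bg] sub0[OF bg] by auto
    show "piG C q x = (\<Sum>(p,q')\<in>?S. if q \<le> q' then comp C p q' x else 0)"
      unfolding piG_def by (rule sum.cong) auto
  qed auto
  thus ?thesis using comp_unique[OF bg] by blast
qed

lemma piG_linear: 
  assumes bg: "bigraded C" shows "linear (piG C q)"
proof (rule linearI)
  show "piG C q (x + y) = piG C q x + piG C q y" for x y
    by (rule comp_ext[OF bg]) (simp add: comp_piG[OF bg] comp_add[OF bg])
  show "piG C q (c *\<^sub>R x) = c *\<^sub>R piG C q x" for c x
    by (rule comp_ext[OF bg]) (simp add: comp_piG[OF bg] comp_scale[OF bg])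
qed

lemma coset_iff: "u \<in> coset B w \<longleftrightarrow> u - w \<in> B"
  unfolding coset_def by (auto simp: algebra_simps) (metis diff_add_cancel)

lemma coset_eq: "subspace B \<Longrightarrow> coset B w = coset B w' \<longleftrightarrow> w - w' \<in> B"
proof
  assume "subspace B" "coset B w = coset B w'"
  moreover have "w \<in> coset B w" using \<open>subspace B\<close> by (simp add: coset_iff subspace_0)
  ultimately show "w - w' \<in> B" by (simp add: coset_iff)
next
  assume B: "subspace B" "w - w' \<in> B"
  show "coset B w = coset B w'"
  proof (rule set_eqI)
    fix u
    have "u - w' = (u - w) + (w - w')" "u - w = (u - w') - (w - w')" by simp_all
    thus "u \<in> coset B w \<longleftrightarrow> u \<in> coset B w'" unfolding coset_iff
      using B by (metis subspace_add subspace_diff)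
  qed
qed

lemma quot_iso_intro:
  assumes A: "subspace A" and A': "subspace A'" and B': "subspace B'"
    and g: "linear g" and h1: "g ` A' \<subseteq> B'" and h2: "g ` A = B"
    and h3: "\<And>x. x \<in> A \<Longrightarrow> g x \<in> B' \<Longrightarrow> x \<in> A'"
  shows "quot_iso A A' B B'"
proof -
  define \<phi> where "\<phi> S = {u. \<exists>s\<in>S. u - g s \<in> B'}" for S
  have key: "\<phi> (coset A' x) = coset B' (g x)" for x
  proof (rule set_eqI)
    fix u
    show "u \<in> \<phi> (coset A' x) \<longleftrightarrow> u \<in> coset B' (g x)"
    proof
      assume "u \<in> \<phi> (coset A' x)"
      then obtain s where s: "s - x \<in> A'" "u - g s \<in> B'" unfolding \<phi>_def by (auto simp: coset_iff)
      have "g (s - x) \<in> B'" using h1 s(1) by blast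
      hence "(u - g s) + g (s - x) \<in> B'" using s(2) B' by (simp add: subspace_add)
      thus "u \<in> coset B' (g x)" using g by (simp add: coset_iff linear_diff)
    next
      assume "u \<in> coset B' (g x)"
      moreover have "x \<in> coset A' x" using A' by (simp add: coset_iff subspace_0)
      ultimately show "u \<in> \<phi> (coset A' x)" unfolding \<phi>_def by (auto simp: coset_iff)
    qed
  qed
  have bij: "bij_betw \<phi> (qspace A A') (qspace B B')"
    unfolding bij_betw_def qspace_def
  proof
    show "inj_on \<phi> (coset A' ` A)"
    proof (rule inj_onI)
      fix S T assume "S \<in> coset A' ` A" "T \<in> coset A' ` A" "\<phi> S = \<phi> T"
      then obtain x y where xy: "x \<in> A" "y \<in> A" "S = coset A' x" "T = coset A' y"
        "coset B' (g x) = coset B' (g y)" using key by auto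
      hence "g (x - y) \<in> B'" using coset_eq[OF B'] g by (simp add: linear_diff)
      moreover have "x - y \<in> A" using A xy by (simp add: subspace_diff)
      ultimately have "x - y \<in> A'" using h3 by blast
      thus "S = T" using xy coset_eq[OF A'] by simp
    qed
    show "\<phi> ` coset A' ` A = coset B' ` B"
      using key h2 by (auto simp: image_image)
  qed
  show ?thesis unfolding quot_iso_def
  proof (intro exI conjI ballI allI impI)
    show "bij_betw \<phi> (qspace A A') (qspace B B')" by (rule bij)
    fix x y c u v
    assume "u \<in> \<phi> (coset A' x)" "v \<in> \<phi> (coset A' y)"
    hence uv: "u - g x \<in> B'" "v - g y \<in> B'" by (simp_all add: key coset_iff)
    have "(c *\<^sub>R u + v) - (c *\<^sub>R g x + g y) = c *\<^sub>R (u - g x) + (v - g y)"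
      by (simp add: algebra_simps)
    also have "\<dots> \<in> B'" using uv B' by (simp add: subspace_add subspace_scale)
    finally have "g (c *\<^sub>R x + y) - (c *\<^sub>R u + v) \<in> B'"
      using g B' by (metis linear_add linear_scale minus_diff_eq subspace_neg)
    thus "\<phi> (coset A' (c *\<^sub>R x + y)) = coset B' (c *\<^sub>R u + v)"
      using key coset_eq[OF B'] by simp
  qed
qed

lemma piG_eq_comp:
  assumes bg: "bigraded C" and b: "b \<in> Ctot C (p+q)" "b \<in> Filt C p"
  shows "piG C q b = comp C p q b"
proof (rule comp_ext[OF bg])
  fix i j
  have z1: "comp C i j b = 0" if "i + j \<noteq> p + q" using b(1) Ctot_iff[OF bg] that by blast
  have z2: "comp C i j b = 0" if "i < p" using b(2) Filt_iff[OF bg] that by blast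
  show "comp C i j (piG C q b) = comp C i j (comp C p q b)"
    unfolding comp_piG[OF bg] comp_in[OF bg comp_C[OF bg]]
    using z1 z2 by (cases "i + j = p + q"; cases "i < p"; auto)
qed

lemma Filt_of_piG:
  assumes bg: "bigraded C" and b: "b \<in> Ctot C (p+q)" "piG C q b \<in> C p q"
  shows "b \<in> Filt C p"
  unfolding Filt_iff[OF bg]
proof (intro allI impI)
  fix i j assume i: "i < p"
  show "comp C i j b = 0"
  proof (cases "i + j = p + q")
    case True
    hence "q \<le> j" using i by simp
    hence "comp C i j b = comp C i j (piG C q b)" by (simp add: comp_piG[OF bg])
    also have "\<dots> = 0" using b(2) C_iff[OF bg] i by auto
    finally show ?thesis .
  next
    case False thus ?thesis using b(1) Ctot_iff[OF bg] by blast
  qed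
qed

lemma lin_Ctot:
  assumes h: "linear h" and hC: "\<And>i j. h ` C i j \<subseteq> Ctot C (i+j+1)"
    and x: "x \<in> Ctot C m"
  shows "h x \<in> Ctot C (m+1)"
proof -
  have "h ` (\<Union>{C i j | i j. i + j = m}) \<subseteq> Ctot C (m+1)" using hC by blast
  hence "span (h ` (\<Union>{C i j | i j. i + j = m})) \<subseteq> Ctot C (m+1)"
    unfolding Ctot_def[of C "m+1"] by (rule span_minimal) simp
  thus ?thesis using x unfolding Ctot_def linear_span_image[OF h] by blast
qed

lemma C_Ctot: "C i j \<subseteq> Ctot C (i+j)"
  unfolding Ctot_def by (auto intro!: span_base)

lemma subspace_setsum:
  assumes X: "subspace X" and Y: "subspace Y" shows "subspace (setsum X Y)"
  unfolding subspace_def setsum_def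
proof (intro conjI allI ballI impI)
  show "0 \<in> {a + b |a b. a \<in> X \<and> b \<in> Y}"
    using X Y subspace_0 by (metis (mono_tags, lifting) add_0 mem_Collect_eq)
next
  fix x y assume "x \<in> {a + b |a b. a \<in> X \<and> b \<in> Y}" "y \<in> {a + b |a b. a \<in> X \<and> b \<in> Y}"
  then obtain a b a' b' where ab: "x = a + b" "a \<in> X" "b \<in> Y" "y = a' + b'" "a' \<in> X" "b' \<in> Y" by blast
  have "x + y = (a + a') + (b + b')" using ab by (simp add: algebra_simps)
  moreover have "a + a' \<in> X" "b + b' \<in> Y" using ab X Y by (simp_all add: subspace_add)
  ultimately show "x + y \<in> {a + b |a b. a \<in> X \<and> b \<in> Y}" by blast
next
  fix c x assume "x \<in> {a + b |a b. a \<in> X \<and> b \<in> Y}"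
  then obtain a b where ab: "x = a + b" "a \<in> X" "b \<in> Y" by blast
  have "c *\<^sub>R x = c *\<^sub>R a + c *\<^sub>R b" using ab by (simp add: scaleR_add_right)
  moreover have "c *\<^sub>R a \<in> X" "c *\<^sub>R b \<in> Y" using ab X Y by (simp_all add: subspace_scale)
  ultimately show "c *\<^sub>R x \<in> {a + b |a b. a \<in> X \<and> b \<in> Y}" by blast
qed

theorem lemma2p1:
  fixes C :: "int \<Rightarrow> int \<Rightarrow> 'a::real_vector set"
    and d d21 d10 d01 :: "'a \<Rightarrow> 'a"
    and p q :: int
  assumes "bigraded C"
    and "\<And>p q. p < 0 \<or> q < 0 \<Longrightarrow> C p q = {0}"
    and "linear d" and "\<And>x. d (d x) = 0"
    and "linear d21" and "linear d10" and "linear d01"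
    and "\<And>x. d x = d21 x + d10 x + d01 x"
    and "\<And>p q. d21 ` C p q \<subseteq> C (p + 2) (q - 1)"
    and "\<And>p q. d10 ` C p q \<subseteq> C (p + 1) q"
    and "\<And>p q. d01 ` C p q \<subseteq> C p (q + 1)"
  shows "quot_iso (Einf_num C d p q) (Einf_den C d p q)
           (piG C q ` cocycles C d (p + q) \<inter> C p q)
           (piG C q ` coboundaries C d (p + q) \<inter> C p q)"
proof -
  note bg = assms(1)
  have CtS: "subspace (Ctot C m)" for m unfolding Ctot_def by simp
  have FS: "subspace (Filt C m)" for m unfolding Filt_def by simp
  have FKS: "subspace (FiltK C m k)" for m k unfolding FiltK_def using CtS FS by (simp add: subspace_inter)
  have dC: "d x \<in> Ctot C (m+1)" if x: "x \<in> Ctot C m" for x m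
  proof -
    have "d21 x \<in> Ctot C (m+1)"
    proof (rule lin_Ctot[OF assms(5) _ x])
      fix i j have eqq: "((i::int)+2)+(j-1) = i+j+1" by simp
      show "d21 ` C i j \<subseteq> Ctot C (i + j + 1)"
        using assms(9)[of i j] C_Ctot[of C "i+2" "j-1"] by (metis order_trans eqq)
    qed
    moreover have "d10 x \<in> Ctot C (m+1)"
    proof (rule lin_Ctot[OF assms(6) _ x])
      fix i j have eqq: "((i::int)+1)+j = i+j+1" by simp
      show "d10 ` C i j \<subseteq> Ctot C (i + j + 1)"
        using assms(10)[of i j] C_Ctot[of C "i+1" "j"] by (metis order_trans eqq)
    qed
    moreover have "d01 x \<in> Ctot C (m+1)"
    proof (rule lin_Ctot[OF assms(7) _ x])
      fix i j have eqq: "(i::int)+(j+1) = i+j+1" by simp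
      show "d01 ` C i j \<subseteq> Ctot C (i + j + 1)"
        using assms(11)[of i j] C_Ctot[of C "i" "j+1"] by (metis order_trans eqq)
    qed
    ultimately show ?thesis using assms(8)[of x] CtS by (simp add: subspace_add)
  qed
  define k where "k = p + q"
  define Z where "Z = cocycles C d k"
  define Bd where "Bd = coboundaries C d k"
  have ZS: "subspace Z" unfolding Z_def cocycles_def
    using subspace_inter[OF CtS linear_subspace_kernel[OF assms(3)]] by (simp add: Int_def)
  have BS: "subspace Bd" unfolding Bd_def coboundaries_def
    by (rule linear_subspace_image[OF assms(3) CtS])
  have BZ: "Bd \<subseteq> Z" unfolding Bd_def Z_def cocycles_def coboundaries_def
    using dC[of _ "k-1"] assms(4) by auto
  have ZC: "Z \<subseteq> Ctot C k" unfolding Z_def cocycles_def by auto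
  define A where "A = setsum (Z \<inter> FiltK C p k) (FiltK C (p+1) k)"
  define A' where "A' = setsum (Bd \<inter> FiltK C p k) (FiltK C (p+1) k)"
  define B where "B = piG C q ` Z \<inter> C p q"
  define B' where "B' = piG C q ` Bd \<inter> C p q"
  have AS: "subspace A" unfolding A_def
    by (intro subspace_setsum subspace_inter ZS FKS)
  have A'S: "subspace A'" unfolding A'_def
    by (intro subspace_setsum subspace_inter BS FKS)
  have CS: "subspace (C p q)" using bg unfolding bigraded_def by blast
  have B'S: "subspace B'" unfolding B'_def
    by (intro subspace_inter linear_subspace_image[OF piG_linear[OF bg] BS] CS)
  let ?g = "comp C p q"
  have g0: "?g f = 0" if "f \<in> FiltK C (p+1) k" for f
    using that Filt_iff[OF bg] unfolding FiltK_def by auto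
  have gpi: "?g b = piG C q b" "piG C q b \<in> C p q" if "b \<in> FiltK C p k" for b
    using that piG_eq_comp[OF bg] comp_C[OF bg] unfolding FiltK_def k_def by auto
  have h1: "?g ` A' \<subseteq> B'"
  proof
    fix y assume "y \<in> ?g ` A'"
    then obtain b f where bf: "b \<in> Bd" "b \<in> FiltK C p k" "f \<in> FiltK C (p+1) k" "y = ?g (b + f)"
      unfolding A'_def setsum_def by auto
    hence "y = ?g b" using g0 comp_add[OF bg] by simp
    thus "y \<in> B'" unfolding B'_def using bf gpi by auto
  qed
  have h2: "?g ` A = B"
  proof
    show "?g ` A \<subseteq> B"
    proof
      fix y assume "y \<in> ?g ` A"
      then obtain b f where bf: "b \<in> Z" "b \<in> FiltK C p k" "f \<in> FiltK C (p+1) k" "y = ?g (b + f)"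
        unfolding A_def setsum_def by auto
      hence "y = ?g b" using g0 comp_add[OF bg] by simp
      thus "y \<in> B" unfolding B_def using bf gpi by auto
    qed
    show "B \<subseteq> ?g ` A"
    proof
      fix y assume "y \<in> B"
      then obtain z where z: "z \<in> Z" "y = piG C q z" "piG C q z \<in> C p q" unfolding B_def by auto
      have "z \<in> Filt C p" using Filt_of_piG[OF bg] z ZC unfolding k_def by blast
      hence zF: "z \<in> FiltK C p k" using z ZC unfolding FiltK_def by auto
      have "z \<in> A" unfolding A_def setsum_def using z zF subspace_0[OF FKS] by force
      moreover have "y = ?g z" using gpi zF z by simp
      ultimately show "y \<in> ?g ` A" by blast
    qed
  qed
  have h3: "x \<in> A'" if x: "x \<in> A" "?g x \<in> B'" for x
  proof -
    obtain z f where zf: "z \<in> Z" "z \<in> FiltK C p k" "f \<in> FiltK C (p+1) k" "x = z + f"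
      using x(1) unfolding A_def setsum_def by auto
    obtain b where b: "b \<in> Bd" "?g x = piG C q b" "piG C q b \<in> C p q"
      using x(2) unfolding B'_def by auto
    have bC: "b \<in> Ctot C k" using b BZ ZC by blast
    have "b \<in> Filt C p" using Filt_of_piG[OF bg] b bC unfolding k_def by blast
    hence bF: "b \<in> FiltK C p k" using bC unfolding FiltK_def by auto
    have gb: "?g b = ?g x" using gpi[OF bF] b by simp
    have xC: "x \<in> Ctot C k" using zf ZC FKS CtS unfolding FiltK_def by (simp add: subspace_add)
    have "x - b \<in> FiltK C (p+1) k"
    proof -
      have "x - b \<in> Ctot C k" using xC bC CtS by (simp add: subspace_diff)
      moreover have "x - b \<in> Filt C (p+1)"
        unfolding Filt_iff[OF bg]
      proof (intro allI impI)
        fix i j assume i: "i < p + 1"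
        show "comp C i j (x - b) = 0"
        proof (cases "i < p")
          case True
          have "comp C i j z = 0" "comp C i j f = 0" "comp C i j b = 0"
            using zf bF True Filt_iff[OF bg] unfolding FiltK_def by auto
          thus ?thesis using zf(4) comp_linear[OF bg] by (simp add: linear_diff comp_add[OF bg])
        next
          case False
          hence ip: "i = p" using i by simp
          show ?thesis
          proof (cases "j = q")
            case True thus ?thesis using ip gb comp_linear[OF bg] by (simp add: linear_diff)
          next
            case False
            hence "i + j \<noteq> k" using ip unfolding k_def by simp
            thus ?thesis using \<open>x - b \<in> Ctot C k\<close> Ctot_iff[OF bg] by blast
          qed
        qed
      qed
      ultimately show ?thesis unfolding FiltK_def by simp
    qed
    moreover have "x = b + (x - b)" by simp
    ultimately show "x \<in> A'" unfolding A'_def setsum_def using b bF by blast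
  qed
  have "quot_iso A A' B B'"
    by (rule quot_iso_intro[OF AS A'S B'S comp_linear[OF bg] h1 h2 h3])
  thus ?thesis unfolding A_def A'_def B_def B'_def Z_def Bd_def k_def
    Einf_num_def Einf_den_def .
qed

end
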